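(* Let $w_1,w_2,v_1,v_2\in\Sigma^*$ such that $\mathsf{Facs}(w_1)\cap\mathsf{Facs}(w_2)=\mathsf{Facs}(v_1)\cap\mathsf{Facs}(v_2)$, and let $r=\max\{|u| : u\in\mathsf{Facs}(w_1)\cap\mathsf{Facs}(w_2)\}$. If $w_1\equiv_{k+r+2} v_1$ and $w_2\equiv_{k+r+2} v_2$ for some $k\in\mathbb{N}$ with $k\ge 1$, then $w_1\cdot w_2\equiv_k v_1\cdot v_2$.
   Context: $\Sigma$ is a fixed finite alphabet. For $w \in \Sigma^*$, $\mathsf{Facs}(w)$ is the set of all factors (contiguous subwords, including $\varepsilon$ and $w$) of $w$. The structure $\mathfrak{A}_w$ representing $w$ has universe $\mathsf{Facs}(w)\cup\{\perp\}$, a ternary relation $R_\circ=\{(x,y,z)\in\mathsf{Facs}(w)^3 : x=y\cdot z\}$, for each letter $\mathtt{a}\in\Sigma$ a constant interpreted as $\mathtt{a}$ if $\mathtt{a}$ occurs in $w$ and as $\perp$ otherwise, and a constant $\varepsilon$ interpreted as the empty word. The $k$-round Ehrenfeucht–Fraïssé game on $\mathfrak{A}_w,\mathfrak{A}_v$: in each round $i$, Spoiler picks one of the two structures and an element of its universe, Duplicator answers with an element of the other structure's universe; let $a_i$ (in $\mathfrak{A}_w$) and $b_i$ (in $\mathfrak{A}_v$) be the chosen elements. Duplicator wins if the tuples $(a_1,\dots,a_k,\vec c^{\,\mathfrak{A}_w})$ and $(b_1,\dots,b_k,\vec c^{\,\mathfrak{A}_v})$, where $\vec c$ lists the interpretations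 of all constants, form a partial isomorphism: for all indices $i,j,l$, $a_i$ equals the interpretation of a constant $c$ iff $b_i$ equals the interpretation of $c$; $a_i=a_j$ iff $b_i=b_j$; and $a_i=a_j\cdot a_l$ iff $b_i=b_j\cdot b_l$. We write $w\equiv_k v$ if Duplicator has a winning strategy in the $k$-round game. *)

theory Defs
  imports Main "HOL-Library.Sublist"
begin

text \<open>Elements of the universe of the word structure are \<open>Some u\<close> with \<open>u\<close> a factor,
  and \<open>None\<close> representing \<open>\<bottom>\<close>.\<close>

definition Facs :: "'a list \<Rightarrow> 'a list set" where
  "Facs w = {u. sublist u w}"

definition univ :: "'a list \<Rightarrow> 'a list option set" where
  "univ w = Some ` Facs w \<union> {None}"

definition letter_const :: "'a list \<Rightarrow> 'a \<Rightarrow> 'a list option" where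
  "letter_const w a = (if a \<in> set w then Some [a] else None)"

definition Rcat :: "'a list option \<Rightarrow> 'a list option \<Rightarrow> 'a list option \<Rightarrow> bool" where
  "Rcat x y z = (\<exists>x' y' z'. x = Some x' \<and> y = Some y' \<and> z = Some z' \<and> x' = y' @ z')"

text \<open>Positions of the extended tuple \<open>(a\<^sub>1,\<dots>,a\<^sub>k, constants)\<close>.\<close>
datatype 'a pos = Chosen nat | Letter 'a | Eps

fun pval :: "'a list \<Rightarrow> 'a list option list \<Rightarrow> 'a pos \<Rightarrow> 'a list option" where
  "pval w as (Chosen i) = as ! i"
| "pval w as (Letter a) = letter_const w a"
| "pval w as Eps = Some []"

fun valid_pos :: "nat \<Rightarrow> 'a pos \<Rightarrow> bool" where
  "valid_pos n (Chosen i) = (i < n)"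
| "valid_pos n _ = True"

definition partial_iso ::
  "'a list \<Rightarrow> 'a list \<Rightarrow> 'a list option list \<Rightarrow> 'a list option list \<Rightarrow> bool" where
  "partial_iso w v as bs \<longleftrightarrow> length as = length bs \<and>
     (\<forall>i j l. valid_pos (length as) i \<and> valid_pos (length as) j \<and> valid_pos (length as) l \<longrightarrow>
        (pval w as i = pval w as j \<longleftrightarrow> pval v bs i = pval v bs j) \<and>
        (Rcat (pval w as i) (pval w as j) (pval w as l) \<longleftrightarrow>
         Rcat (pval v bs i) (pval v bs j) (pval v bs l)))"

fun dup_wins :: "nat \<Rightarrow> 'a list \<Rightarrow> 'a list \<Rightarrow> 'a list option list \<Rightarrow> 'a list option list \<Rightarrow> bool" where
  "dup_wins 0 w v as bs = partial_iso w v as bs"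
| "dup_wins (Suc n) w v as bs =
     ((\<forall>a\<in>univ w. \<exists>b\<in>univ v. dup_wins n w v (as @ [a]) (bs @ [b])) \<and>
      (\<forall>b\<in>univ v. \<exists>a\<in>univ w. dup_wins n w v (as @ [a]) (bs @ [b])))"

definition ef_equiv :: "'a list \<Rightarrow> nat \<Rightarrow> 'a list \<Rightarrow> bool" ("_ \<equiv>\<^sub>_ _" [51, 0, 51] 50) where
  "ef_equiv w k v \<longleftrightarrow> dup_wins k w v [] []"

end

theory Submission
  imports Defs
begin

lemma sub_trans: "sublist a b \<Longrightarrow> sublist b c \<Longrightarrow> sublist a c"
  using sublist_order.order_trans by blast

lemma valid_mono: "valid_pos n q \<Longrightarrow> n \<le> m \<Longrightarrow> valid_pos m q"
  by (cases q) auto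

lemma pval_app: "valid_pos (length A) q \<Longrightarrow> pval w (A @ X) q = pval w A q"
  by (cases q) (auto simp: nth_append)

lemma pval_last: "pval w (A @ [x]) (Chosen (length A)) = x"
  by simp

lemma pval_last2: "pval w (A @ [x, y]) (Chosen (Suc (length A))) = y"
  by (simp add: nth_append)

lemma piso_prefix:
  assumes "partial_iso w v (A@[a]) (B@[b])"
  shows "partial_iso w v A B"
proof -
  have L: "length A = length B" using assms by (simp add: partial_iso_def)
  have "\<forall>i j l. valid_pos (length A) i \<and> valid_pos (length A) j \<and> valid_pos (length A) l \<longrightarrow>
        (pval w A i = pval w A j \<longleftrightarrow> pval v B i = pval v B j) \<and>
        (Rcat (pval w A i) (pval w A j) (pval w A l) \<longleftrightarrow>
         Rcat (pval v B i) (pval v B j) (pval v B l))"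
  proof (intro allI impI)
    fix i j l :: "'a pos" assume V: "valid_pos (length A) i \<and> valid_pos (length A) j \<and> valid_pos (length A) l"
    hence V': "valid_pos (length (A@[a])) i \<and> valid_pos (length (A@[a])) j \<and> valid_pos (length (A@[a])) l"
      using valid_mono by (metis le_add1 length_append)
    from assms V' have
      "(pval w (A@[a]) i = pval w (A@[a]) j \<longleftrightarrow> pval v (B@[b]) i = pval v (B@[b]) j) \<and>
        (Rcat (pval w (A@[a]) i) (pval w (A@[a]) j) (pval w (A@[a]) l) \<longleftrightarrow>
         Rcat (pval v (B@[b]) i) (pval v (B@[b]) j) (pval v (B@[b]) l))"
      unfolding partial_iso_def by blast
    moreover have "pval w (A@[a]) i = pval w A i" "pval w (A@[a]) j = pval w A j" "pval w (A@[a]) l = pval w A l"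
      using V pval_app by auto
    moreover have "pval v (B@[b]) i = pval v B i" "pval v (B@[b]) j = pval v B j" "pval v (B@[b]) l = pval v B l"
      using V L pval_app by auto
    ultimately show "(pval w A i = pval w A j \<longleftrightarrow> pval v B i = pval v B j) \<and>
        (Rcat (pval w A i) (pval w A j) (pval w A l) \<longleftrightarrow>
         Rcat (pval v B i) (pval v B j) (pval v B l))"
      by simp
  qed
  thus ?thesis using L unfolding partial_iso_def by blast
qed

lemma None_univ: "None \<in> univ w" by (simp add: univ_def)

lemma dwI: "\<lbrakk>\<forall>a\<in>univ w. \<exists>b\<in>univ v. dup_wins n w v (A@[a]) (B@[b]);
  \<forall>b\<in>univ v. \<exists>a\<in>univ w. dup_wins n w v (A@[a]) (B@[b])\<rbrakk> \<Longrightarrow> dup_wins (Suc n) w v A B"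
  by simp

lemma dwD1: "dup_wins (Suc n) w v A B \<Longrightarrow> a \<in> univ w \<Longrightarrow> \<exists>b\<in>univ v. dup_wins n w v (A@[a]) (B@[b])"
  by simp

lemma dwD2: "dup_wins (Suc n) w v A B \<Longrightarrow> b \<in> univ v \<Longrightarrow> \<exists>a\<in>univ w. dup_wins n w v (A@[a]) (B@[b])"
  by simp

lemma dw_iso: "dup_wins n w v A B \<Longrightarrow> partial_iso w v A B"
proof (induction n arbitrary: A B)
  case 0 thus ?case by simp
next
  case (Suc n)
  then obtain b where "dup_wins n w v (A@[None]) (B@[b])" using None_univ dwD1 by blast
  thus ?case using Suc.IH piso_prefix by blast
qed

lemma dw_mono1: "dup_wins (Suc n) w v A B \<Longrightarrow> dup_wins n w v A B"
proof (induction n arbitrary: A B)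
  case 0
  then obtain b where "dup_wins 0 w v (A@[None]) (B@[b])" using None_univ dwD1 by blast
  thus ?case using piso_prefix by simp
next
  case (Suc n)
  show ?case
  proof (rule dwI)
    show "\<forall>a\<in>univ w. \<exists>b\<in>univ v. dup_wins n w v (A @ [a]) (B @ [b])"
    proof
      fix a assume "a \<in> univ w"
      then obtain b where "b \<in> univ v" "dup_wins (Suc n) w v (A @ [a]) (B @ [b])" using Suc.prems dwD1 by blast
      thus "\<exists>b\<in>univ v. dup_wins n w v (A @ [a]) (B @ [b])" using Suc.IH by blast
    qed
    show "\<forall>b\<in>univ v. \<exists>a\<in>univ w. dup_wins n w v (A @ [a]) (B @ [b])"
    proof
      fix b assume "b \<in> univ v"
      then obtain a where "a \<in> univ w" "dup_wins (Suc n) w v (A @ [a]) (B @ [b])" using Suc.prems dwD2 by blast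
      thus "\<exists>a\<in>univ w. dup_wins n w v (A @ [a]) (B @ [b])" using Suc.IH by blast
    qed
  qed
qed

lemma dw_mono: "dup_wins n w v A B \<Longrightarrow> m \<le> n \<Longrightarrow> dup_wins m w v A B"
proof (induction n)
  case 0 thus ?case by simp
next
  case (Suc n) thus ?case using dw_mono1 le_Suc_eq by blast
qed

lemma piso_sym:
  assumes P: "partial_iso w v A B" shows "partial_iso v w B A"
proof -
  have L: "length A = length B" using P by (simp add: partial_iso_def)
  have H: "\<And>i j l. valid_pos (length A) i \<and> valid_pos (length A) j \<and> valid_pos (length A) l \<Longrightarrow>
        (pval w A i = pval w A j \<longleftrightarrow> pval v B i = pval v B j) \<and>
        (Rcat (pval w A i) (pval w A j) (pval w A l) \<longleftrightarrow>
         Rcat (pval v B i) (pval v B j) (pval v B l))" using P unfolding partial_iso_def by blast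
  have "\<forall>i j l. valid_pos (length B) i \<and> valid_pos (length B) j \<and> valid_pos (length B) l \<longrightarrow>
        (pval v B i = pval v B j \<longleftrightarrow> pval w A i = pval w A j) \<and>
        (Rcat (pval v B i) (pval v B j) (pval v B l) \<longleftrightarrow>
         Rcat (pval w A i) (pval w A j) (pval w A l))"
  proof (intro allI impI)
    fix i j l :: "'a pos"
    assume "valid_pos (length B) i \<and> valid_pos (length B) j \<and> valid_pos (length B) l"
    hence "(pval w A i = pval w A j \<longleftrightarrow> pval v B i = pval v B j) \<and>
        (Rcat (pval w A i) (pval w A j) (pval w A l) \<longleftrightarrow>
         Rcat (pval v B i) (pval v B j) (pval v B l))" using H L by metis
    thus "(pval v B i = pval v B j \<longleftrightarrow> pval w A i = pval w A j) \<and>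
        (Rcat (pval v B i) (pval v B j) (pval v B l) \<longleftrightarrow>
         Rcat (pval w A i) (pval w A j) (pval w A l))" by blast
  qed
  thus ?thesis using L unfolding partial_iso_def by (simp only: simp_thms)
qed

lemma dw_sym: "dup_wins n w v A B \<Longrightarrow> dup_wins n v w B A"
proof (induction n arbitrary: A B)
  case 0 thus ?case using piso_sym by simp
next
  case (Suc n)
  show ?case
  proof (rule dwI)
    show "\<forall>b\<in>univ v. \<exists>a\<in>univ w. dup_wins n v w (B @ [b]) (A @ [a])"
    proof
      fix b assume "b \<in> univ v"
      then obtain a where "a \<in> univ w" "dup_wins n w v (A @ [a]) (B @ [b])" using Suc.prems dwD2 by blast
      thus "\<exists>a\<in>univ w. dup_wins n v w (B @ [b]) (A @ [a])" using Suc.IH by blast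
    qed
    show "\<forall>a\<in>univ w. \<exists>b\<in>univ v. dup_wins n v w (B @ [b]) (A @ [a])"
    proof
      fix a assume "a \<in> univ w"
      then obtain b where "b \<in> univ v" "dup_wins n w v (A @ [a]) (B @ [b])" using Suc.prems dwD1 by blast
      thus "\<exists>b\<in>univ v. dup_wins n v w (B @ [b]) (A @ [a])" using Suc.IH by blast
    qed
  qed
qed

lemma iso_eq: "partial_iso w v A B \<Longrightarrow> valid_pos (length A) q \<Longrightarrow> valid_pos (length A) q'
  \<Longrightarrow> (pval w A q = pval w A q') = (pval v B q = pval v B q')"
  unfolding partial_iso_def by blast

lemma Rcat_self: "Rcat x (Some []) x \<longleftrightarrow> x \<noteq> None"
  by (auto simp: Rcat_def)

lemma iso_some: "partial_iso w v A B \<Longrightarrow> valid_pos (length A) q \<Longrightarrow> pval w A q \<noteq> None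
  \<Longrightarrow> pval v B q \<noteq> None"
proof -
  assume P: "partial_iso w v A B" and V: "valid_pos (length A) q" and N: "pval w A q \<noteq> None"
  have "Rcat (pval w A q) (pval w A Eps) (pval w A q)" using N by (auto simp: Rcat_def)
  hence "Rcat (pval v B q) (pval v B Eps) (pval v B q)" using P V unfolding partial_iso_def
    by (metis valid_pos.simps(3))
  thus ?thesis by (auto simp: Rcat_def)
qed

lemma iso_R:
  assumes P: "partial_iso w v A B" and V: "valid_pos (length A) q1" "valid_pos (length A) q2" "valid_pos (length A) q3"
    and S: "pval w A q1 = Some (b @ c)" "pval w A q2 = Some b" "pval w A q3 = Some c"
  shows "\<exists>b' c'. pval v B q2 = Some b' \<and> pval v B q3 = Some c' \<and> pval v B q1 = Some (b' @ c')"
proof -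
  have "Rcat (pval w A q1) (pval w A q2) (pval w A q3)" using S by (simp add: Rcat_def)
  hence "Rcat (pval v B q1) (pval v B q2) (pval v B q3)" using P V unfolding partial_iso_def by blast
  thus ?thesis by (auto simp: Rcat_def)
qed

lemma Some_univ: "Some m \<in> univ w \<longleftrightarrow> sublist m w"
  by (auto simp: univ_def Facs_def)

lemma univ_cases: "b \<in> univ v \<Longrightarrow> b = None \<or> (\<exists>m. b = Some m \<and> sublist m v)"
  by (auto simp: univ_def Facs_def)

lemma dw_len: "dup_wins n w v A B \<Longrightarrow> length A = length B"
  using dw_iso unfolding partial_iso_def by blast

lemma lc_some: "c \<in> set w \<Longrightarrow> letter_const w c = Some [c]"
  by (simp add: letter_const_def)

lemma lc_cases: "letter_const w c = Some x \<Longrightarrow> x = [c]"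
  by (auto simp: letter_const_def split: if_splits)

lemma sub_set: "sublist [c] w \<Longrightarrow> c \<in> set w"
  using set_mono_sublist by fastforce

lemma PIN: "dup_wins j w v A B \<Longrightarrow> valid_pos (length A) q \<Longrightarrow> pval w A q = Some t \<Longrightarrow> sublist t w
  \<Longrightarrow> length t \<le> Suc j \<Longrightarrow> pval v B q = Some t"
proof (induction t arbitrary: j A B q)
  case Nil
  have P: "partial_iso w v A B" using Nil.prems(1) dw_iso by blast
  have "pval w A q = pval w A Eps" using Nil.prems by simp
  hence "pval v B q = pval v B Eps" using iso_eq[OF P Nil.prems(2)] by (metis valid_pos.simps(3))
  thus ?case by simp
next
  case (Cons c t)
  have P: "partial_iso w v A B" using Cons.prems(1) dw_iso by blast
  have L: "length A = length B" using P by (simp add: partial_iso_def)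
  have cw: "c \<in> set w" using Cons.prems(4) set_mono_sublist by fastforce
  show ?case
  proof (cases "t = []")
    case True
    have "pval w A q = pval w A (Letter c)" using Cons.prems(3) True cw by (simp add: lc_some)
    hence E: "pval v B q = pval v B (Letter c)" using iso_eq[OF P Cons.prems(2)] by (metis valid_pos.simps(2))
    have "pval v B (Letter c) \<noteq> None" using iso_some[OF P, of "Letter c"] cw by (simp add: lc_some)
    then obtain x where "letter_const v c = Some x" by auto
    thus ?thesis using E True lc_cases by fastforce
  next
    case False
    then obtain j' where j: "j = Suc j'" using Cons.prems(5) by (cases j) auto
    have tw: "sublist t w" using Cons.prems(4) sub_trans[of t "c#t" w]
      by (metis append_Cons append_Nil sublist_append_leftI)
    obtain b where b: "b \<in> univ v" and D: "dup_wins j' w v (A@[Some t]) (B@[b])"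
      using dwD1[of j' w v A B "Some t"] Cons.prems(1) j tw Some_univ by blast
    have "pval v (B@[b]) (Chosen (length A)) = Some t"
      using Cons.IH[OF D, of "Chosen (length A)"] tw Cons.prems(5) j by simp
    hence bt: "b = Some t" using L by simp
    have P2: "partial_iso w v (A@[Some t]) (B@[b])" using D dw_iso by blast
    have V: "valid_pos (length (A@[Some t])) q" using Cons.prems(2) valid_mono by fastforce
    have "\<exists>b' c'. pval v (B@[b]) (Letter c) = Some b' \<and> pval v (B@[b]) (Chosen (length A)) = Some c'
       \<and> pval v (B@[b]) q = Some (b' @ c')"
      apply (rule iso_R[OF P2 V])
      using Cons.prems(2,3) cw by (auto simp: pval_app lc_some)
    then obtain b' c' where "letter_const v c = Some b'" "pval v (B@[b]) (Chosen (length A)) = Some c'"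
      "pval v (B@[b]) q = Some (b' @ c')" by auto
    thus ?thesis using bt L lc_cases pval_app Cons.prems(2) by (metis Cons_eq_appendI append_self_conv2 option.inject pval_last)
  qed
qed

lemma OP_import: "dup_wins (Suc n) w v A B \<Longrightarrow> sublist t w \<Longrightarrow> length t \<le> Suc n
  \<Longrightarrow> dup_wins n w v (A@[Some t]) (B@[Some t])"
proof -
  assume D: "dup_wins (Suc n) w v A B" and t: "sublist t w" "length t \<le> Suc n"
  then obtain b where b: "dup_wins n w v (A@[Some t]) (B@[b])" using dwD1 Some_univ by blast
  have L: "length A = length B" using D dw_len by blast
  have "pval v (B@[b]) (Chosen (length A)) = Some t" using PIN[OF b, of "Chosen (length A)"] t by simp
  hence "b = Some t" using L by simp
  thus ?thesis using b by simp
qed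

lemma OP_pick: "dup_wins (Suc n) w v A B \<Longrightarrow> sublist m w
  \<Longrightarrow> \<exists>m'. sublist m' v \<and> dup_wins n w v (A@[Some m]) (B@[Some m'])"
proof -
  assume D: "dup_wins (Suc n) w v A B" and t: "sublist m w"
  then obtain b where bu: "b \<in> univ v" and b: "dup_wins n w v (A@[Some m]) (B@[b])" using dwD1 Some_univ by blast
  have L: "length A = length B" using D dw_len by blast
  have "pval v (B@[b]) (Chosen (length A)) \<noteq> None"
    using iso_some[OF dw_iso[OF b], of "Chosen (length A)"] by simp
  hence "b \<noteq> None" using L by simp
  thus ?thesis using bu b univ_cases by blast
qed

lemma proper_ext: "sublist u w \<Longrightarrow> u \<noteq> w \<Longrightarrow> \<exists>c. sublist (u@[c]) w \<or> sublist (c#u) w"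
proof -
  assume "sublist u w" "u \<noteq> w"
  then obtain ps ss where w: "w = ps @ u @ ss" by (auto simp: sublist_def)
  hence ne: "ps \<noteq> [] \<or> ss \<noteq> []" using \<open>u \<noteq> w\<close> by auto
  show ?thesis
  proof (cases ss)
    case (Cons c ss')
    hence "w = ps @ (u@[c]) @ ss'" using w by simp
    thus ?thesis unfolding sublist_def by blast
  next
    case Nil
    hence "ps \<noteq> []" using ne by simp
    hence "w = butlast ps @ (last ps # u) @ ss" using w by simp
    thus ?thesis unfolding sublist_def by blast
  qed
qed

lemma FORCE: "dup_wins (Suc (Suc j)) w v A B \<Longrightarrow> dup_wins (Suc j) w v (A@[Some w]) (B@[Some v])"
proof -
  assume D0: "dup_wins (Suc (Suc j)) w v A B"
  have L: "length A = length B" using D0 dw_len by blast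
  obtain a where au: "a \<in> univ w" and D: "dup_wins (Suc j) w v (A@[a]) (B@[Some v])"
    using dwD2[OF D0, of "Some v"] Some_univ by blast
  have "pval w (A@[a]) (Chosen (length B)) \<noteq> None"
    using iso_some[OF piso_sym[OF dw_iso[OF D]], of "Chosen (length B)"] L by simp
  hence "a \<noteq> None" using L by (simp add: nth_append)
  then obtain u where au': "a = Some u" and uw: "sublist u w" using au univ_cases by blast
  have "u = w"
  proof (rule ccontr)
    assume "u \<noteq> w"
    then obtain c where "sublist (u@[c]) w \<or> sublist (c#u) w" using proper_ext uw by blast
    thus False
    proof
      assume s: "sublist (u@[c]) w"
      hence cw: "c \<in> set w" using set_mono_sublist by fastforce
      obtain b where bu: "b \<in> univ v" and D2: "dup_wins j w v ((A@[a])@[Some (u@[c])]) ((B@[Some v])@[b])"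
        using dwD1[OF D, of "Some (u@[c])"] s Some_univ by blast
      have "\<exists>b' c'. pval v ((B@[Some v])@[b]) (Chosen (length A)) = Some b' \<and>
          pval v ((B@[Some v])@[b]) (Letter c) = Some c' \<and> pval v ((B@[Some v])@[b]) (Chosen (Suc (length A))) = Some (b' @ c')"
        apply (rule iso_R[OF dw_iso[OF D2]])
        using cw au' by (auto simp: nth_append lc_some)
      then obtain c' where "b = Some (v @ c')" using L by (auto simp: nth_append)
      hence "sublist (v @ c') v" "c' = [c]" using bu Some_univ
        apply blast using \<open>\<exists>b' c'. _\<close> lc_cases \<open>b = Some (v @ c')\<close> L by (auto simp: nth_append)
      thus False using sublist_length_le by fastforce
    next
      assume s: "sublist (c#u) w"
      hence cw: "c \<in> set w" using set_mono_sublist by fastforce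
      obtain b where bu: "b \<in> univ v" and D2: "dup_wins j w v ((A@[a])@[Some (c#u)]) ((B@[Some v])@[b])"
        using dwD1[OF D, of "Some (c#u)"] s Some_univ by blast
      have "\<exists>b' c'. pval v ((B@[Some v])@[b]) (Letter c) = Some b' \<and>
          pval v ((B@[Some v])@[b]) (Chosen (length A)) = Some c' \<and> pval v ((B@[Some v])@[b]) (Chosen (Suc (length A))) = Some (b' @ c')"
        apply (rule iso_R[OF dw_iso[OF D2]])
        using cw au' by (auto simp: nth_append lc_some)
      then obtain c' where "b = Some (c' @ v)" using L by (auto simp: nth_append)
      hence "sublist (c' @ v) v" "c' = [c]" using bu Some_univ
        apply blast using \<open>\<exists>b' c'. _\<close> lc_cases \<open>b = Some (c' @ v)\<close> L by (auto simp: nth_append)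
      thus False using sublist_length_le by fastforce
    qed
  qed
  thus ?thesis using D au' by simp
qed

lemma SUFFIX: "dup_wins (Suc (Suc j)) w v A B \<Longrightarrow> valid_pos (length A) q \<Longrightarrow> pval w A q = Some s
  \<Longrightarrow> suffix s w \<Longrightarrow> \<exists>s'. pval v B q = Some s' \<and> suffix s' v"
proof -
  assume D0: "dup_wins (Suc (Suc j)) w v A B" and V: "valid_pos (length A) q" and S: "pval w A q = Some s"
    and su: "suffix s w"
  have L: "length A = length B" using D0 dw_len by blast
  have F: "dup_wins (Suc j) w v (A@[Some w]) (B@[Some v])" using FORCE[OF D0] .
  obtain z where wz: "w = z @ s" using su by (auto simp: suffix_def)
  obtain z' where D: "dup_wins j w v ((A@[Some w])@[Some z]) ((B@[Some v])@[Some z'])"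
    using OP_pick[OF F, of z] wz by blast
  have V': "valid_pos (length ((A@[Some w])@[Some z])) q" using V valid_mono by fastforce
  have "\<exists>b' c'. pval v ((B@[Some v])@[Some z']) (Chosen (Suc (length A))) = Some b' \<and>
          pval v ((B@[Some v])@[Some z']) q = Some c' \<and> pval v ((B@[Some v])@[Some z']) (Chosen (length A)) = Some (b' @ c')"
    apply (rule iso_R[OF dw_iso[OF D]])
    using V V' S wz by (auto simp: nth_append pval_app)
  then obtain c' where 1: "pval v ((B@[Some v])@[Some z']) q = Some c'" and 2: "v = z' @ c'" using L
    by (auto simp: nth_append)
  have "pval v ((B@[Some v])@[Some z']) q = pval v B q" using V L pval_app[of B q v] by simp
  thus ?thesis using 1 2 by (auto simp: suffix_def)
qed

lemma PREFIX: "dup_wins (Suc (Suc j)) w v A B \<Longrightarrow> valid_pos (length A) q \<Longrightarrow> pval w A q = Some s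
  \<Longrightarrow> prefix s w \<Longrightarrow> \<exists>s'. pval v B q = Some s' \<and> prefix s' v"
proof -
  assume D0: "dup_wins (Suc (Suc j)) w v A B" and V: "valid_pos (length A) q" and S: "pval w A q = Some s"
    and su: "prefix s w"
  have L: "length A = length B" using D0 dw_len by blast
  have F: "dup_wins (Suc j) w v (A@[Some w]) (B@[Some v])" using FORCE[OF D0] .
  obtain z where wz: "w = s @ z" using su by (auto simp: prefix_def)
  obtain z' where D: "dup_wins j w v ((A@[Some w])@[Some z]) ((B@[Some v])@[Some z'])"
    using OP_pick[OF F, of z] wz by blast
  have V': "valid_pos (length ((A@[Some w])@[Some z])) q" using V valid_mono by fastforce
  have "\<exists>b' c'. pval v ((B@[Some v])@[Some z']) q = Some b' \<and>
          pval v ((B@[Some v])@[Some z']) (Chosen (Suc (length A))) = Some c' \<and> pval v ((B@[Some v])@[Some z']) (Chosen (length A)) = Some (b' @ c')"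
    apply (rule iso_R[OF dw_iso[OF D]])
    using V V' S wz by (auto simp: nth_append pval_app)
  then obtain c' where 1: "pval v ((B@[Some v])@[Some z']) q = Some c'" and 2: "\<exists>z''. v = c' @ z''" using L
    by (auto simp: nth_append)
  have "pval v ((B@[Some v])@[Some z']) q = pval v B q" using V L pval_app[of B q v] by simp
  thus ?thesis using 1 2 by (auto simp: prefix_def)
qed

lemma iso_R2: "dup_wins n w v A B \<Longrightarrow> valid_pos (length A) q1 \<Longrightarrow> valid_pos (length A) q2 \<Longrightarrow> valid_pos (length A) q3
  \<Longrightarrow> pval w A q1 = Some (b@c) \<Longrightarrow> pval w A q2 = Some b \<Longrightarrow> pval w A q3 = Some c
  \<Longrightarrow> pval v B q2 = Some b' \<Longrightarrow> pval v B q3 = Some c' \<Longrightarrow> pval v B q1 = Some (b'@c')"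
  using iso_R[OF dw_iso, of n w v A B q1 q2 q3 b c] by auto

lemma vext: "valid_pos (length A) q \<Longrightarrow> valid_pos (length (A @ X)) q"
  using valid_mono by fastforce

lemma vS: "valid_pos n q \<Longrightarrow> valid_pos (Suc n) q"
  by (cases q) auto

lemma vSS: "valid_pos n q \<Longrightarrow> valid_pos (Suc (Suc n)) q"
  by (cases q) auto

lemma T1:
  assumes D: "dup_wins (Suc n) w v A B" and t: "sublist t w" "length t \<le> Suc n"
    and V: "valid_pos (length A) qa" "valid_pos (length A) qb"
    and W: "pval w A qa = Some (b@t)" "pval w A qb = Some b" and Y: "pval v B qb = Some b'"
  shows "pval v B qa = Some (b'@t)"
proof -
  have L: "length A = length B" using D dw_len by blast
  have D': "dup_wins n w v (A@[Some t]) (B@[Some t])" using OP_import[OF D t] .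
  have "pval v (B@[Some t]) qa = Some (b'@t)"
    apply (rule iso_R2[OF D', of qa qb "Chosen (length A)" b t])
    using V W Y L by (auto simp: pval_app vext vS vSS nth_append)
  thus ?thesis using V L by (simp add: pval_app vS vSS nth_append)
qed

lemma T1':
  assumes D: "dup_wins (Suc n) w v A B" and t: "sublist t w" "length t \<le> Suc n"
    and V: "valid_pos (length A) qa" "valid_pos (length A) qb"
    and W: "pval w A qa = Some (t@b)" "pval w A qb = Some b" and Y: "pval v B qb = Some b'"
  shows "pval v B qa = Some (t@b')"
proof -
  have L: "length A = length B" using D dw_len by blast
  have D': "dup_wins n w v (A@[Some t]) (B@[Some t])" using OP_import[OF D t] .
  have "pval v (B@[Some t]) qa = Some (t@b')"
    apply (rule iso_R2[OF D', of qa "Chosen (length A)" qb t b])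
    using V W Y L by (auto simp: pval_app vext vS vSS nth_append)
  thus ?thesis using V L by (simp add: pval_app vS vSS nth_append)
qed

lemma T2:
  assumes D: "dup_wins (Suc (Suc n)) w v A B" and t: "sublist t w" "length t \<le> Suc (Suc n)"
    and m: "sublist m w"
    and V: "valid_pos (length A) qs" "valid_pos (length A) qa" "valid_pos (length A) ql"
    and W: "pval w A qs = Some (a@m)" "pval w A qa = Some a" "pval w A ql = Some (m@t)"
    and Y: "pval v B qa = Some a'"
  shows "\<exists>m'. pval v B qs = Some (a'@m') \<and> pval v B ql = Some (m'@t)"
proof -
  have L: "length A = length B" using D dw_len by blast
  have D1: "dup_wins (Suc n) w v (A@[Some t]) (B@[Some t])" using OP_import[OF D t] .
  obtain m' where D2: "dup_wins n w v ((A@[Some t])@[Some m]) ((B@[Some t])@[Some m'])"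
    using OP_pick[OF D1 m] by blast
  have "pval v ((B@[Some t])@[Some m']) qs = Some (a'@m')"
    apply (rule iso_R2[OF D2, of qs qa "Chosen (Suc (length A))" a m])
    using V W Y L by (auto simp: pval_app vext vS vSS nth_append)
  moreover have "pval v ((B@[Some t])@[Some m']) ql = Some (m'@t)"
    apply (rule iso_R2[OF D2, of ql "Chosen (Suc (length A))" "Chosen (length A)" m t])
    using V W Y L by (auto simp: pval_app vext vS vSS nth_append)
  ultimately show ?thesis using V L by (auto simp: pval_app vext vS vSS nth_append)
qed

lemma T2m:
  assumes D: "dup_wins (Suc (Suc n)) w v A B" and t: "sublist t w" "length t \<le> Suc (Suc n)"
    and m: "sublist m w"
    and V: "valid_pos (length A) qx" "valid_pos (length A) qy" "valid_pos (length A) qc"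
    and W: "pval w A qx = Some (t@m)" "pval w A qy = Some (m@c)" "pval w A qc = Some c"
    and Y: "pval v B qc = Some c'"
  shows "\<exists>m'. pval v B qx = Some (t@m') \<and> pval v B qy = Some (m'@c')"
proof -
  have L: "length A = length B" using D dw_len by blast
  have D1: "dup_wins (Suc n) w v (A@[Some t]) (B@[Some t])" using OP_import[OF D t] .
  obtain m' where D2: "dup_wins n w v ((A@[Some t])@[Some m]) ((B@[Some t])@[Some m'])"
    using OP_pick[OF D1 m] by blast
  have "pval v ((B@[Some t])@[Some m']) qx = Some (t@m')"
    apply (rule iso_R2[OF D2, of qx "Chosen (length A)" "Chosen (Suc (length A))" t m])
    using V W Y L by (auto simp: pval_app vext vS vSS nth_append)
  moreover have "pval v ((B@[Some t])@[Some m']) qy = Some (m'@c')"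
    apply (rule iso_R2[OF D2, of qy "Chosen (Suc (length A))" qc m c])
    using V W Y L by (auto simp: pval_app vext vS vSS nth_append)
  ultimately show ?thesis using V L by (auto simp: pval_app vext vS vSS nth_append)
qed

lemma T3:
  assumes D: "dup_wins (Suc (Suc n)) w v A B" and t: "sublist t w" "length t \<le> Suc (Suc n)"
    and m: "sublist (sl@t) w"
    and V: "valid_pos (length A) qs" "valid_pos (length A) qa" "valid_pos (length A) ql"
    and W: "pval w A qs = Some (a@(sl@t))" "pval w A qa = Some a" "pval w A ql = Some sl"
    and Y: "pval v B qa = Some a'" "pval v B ql = Some sl'"
  shows "pval v B qs = Some (a'@(sl'@t))"
proof -
  have L: "length A = length B" using D dw_len by blast
  have D1: "dup_wins (Suc n) w v (A@[Some t]) (B@[Some t])" using OP_import[OF D t] .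
  obtain m' where D2: "dup_wins n w v ((A@[Some t])@[Some (sl@t)]) ((B@[Some t])@[Some m'])"
    using OP_pick[OF D1 m] by blast
  have "pval v ((B@[Some t])@[Some m']) (Chosen (Suc (length A))) = Some (sl'@t)"
    apply (rule iso_R2[OF D2, of "Chosen (Suc (length A))" ql "Chosen (length A)" sl t])
    using V W Y L by (auto simp: pval_app vext vS vSS nth_append)
  hence "m' = sl'@t" using L by (simp add: nth_append)
  moreover have "pval v ((B@[Some t])@[Some m']) qs = Some (a'@m')"
    apply (rule iso_R2[OF D2, of qs qa "Chosen (Suc (length A))" a "sl@t"])
    using V W Y L by (auto simp: pval_app vext vS vSS nth_append)
  ultimately show ?thesis using V L by (auto simp: pval_app vext vS vSS nth_append)
qed

lemma T3m:
  assumes D: "dup_wins (Suc (Suc n)) w v A B" and t: "sublist t w" "length t \<le> Suc (Suc n)"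
    and m: "sublist (t@pj) w"
    and V: "valid_pos (length A) qp" "valid_pos (length A) qj" "valid_pos (length A) qb"
    and W: "pval w A qp = Some ((t@pj)@b)" "pval w A qj = Some pj" "pval w A qb = Some b"
    and Y: "pval v B qj = Some pj'" "pval v B qb = Some b'"
  shows "pval v B qp = Some ((t@pj')@b')"
proof -
  have L: "length A = length B" using D dw_len by blast
  have D1: "dup_wins (Suc n) w v (A@[Some t]) (B@[Some t])" using OP_import[OF D t] .
  obtain m' where D2: "dup_wins n w v ((A@[Some t])@[Some (t@pj)]) ((B@[Some t])@[Some m'])"
    using OP_pick[OF D1 m] by blast
  have "pval v ((B@[Some t])@[Some m']) (Chosen (Suc (length A))) = Some (t@pj')"
    apply (rule iso_R2[OF D2, of "Chosen (Suc (length A))" "Chosen (length A)" qj t pj])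
    using V W Y L by (auto simp: pval_app vext vS vSS nth_append)
  hence "m' = t@pj'" using L by (simp add: nth_append)
  moreover have "pval v ((B@[Some t])@[Some m']) qp = Some (m'@b')"
    apply (rule iso_R2[OF D2, of qp "Chosen (Suc (length A))" qb "t@pj" b])
    using V W Y L by (auto simp: pval_app vext vS vSS nth_append)
  ultimately show ?thesis using V L by (auto simp: pval_app vext vS vSS nth_append)
qed

definition good :: "'a list \<Rightarrow> 'a list \<Rightarrow> 'a list \<Rightarrow> 'a list \<Rightarrow> 'a list option list \<Rightarrow> 'a list option list
  \<Rightarrow> 'a list option list \<Rightarrow> 'a list option list \<Rightarrow> 'a list option \<Rightarrow> 'a list option \<Rightarrow> 'a pos \<Rightarrow> 'a pos \<Rightarrow> bool"
where
"good w1 w2 v1 v2 A1 B1 A2 B2 x y q1 q2 \<longleftrightarrow> valid_pos (length A1) q1 \<and> valid_pos (length A2) q2 \<and>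
 ((x = None \<and> y = None) \<or>
  (\<exists>u. x = Some u \<and> y = Some u \<and> sublist u w1 \<and> sublist u w2 \<and> sublist u v1 \<and> sublist u v2 \<and>
      pval w1 A1 q1 = x \<and> pval v1 B1 q1 = x \<and> pval w2 A2 q2 = x \<and> pval v2 B2 q2 = x) \<or>
  (\<exists>u u'. x = Some u \<and> y = Some u' \<and> sublist u w1 \<and> \<not> sublist u w2 \<and> sublist u' v1 \<and> \<not> sublist u' v2 \<and>
      pval w1 A1 q1 = x \<and> pval v1 B1 q1 = y) \<or>
  (\<exists>u u'. x = Some u \<and> y = Some u' \<and> sublist u w2 \<and> \<not> sublist u w1 \<and> sublist u' v2 \<and> \<not> sublist u' v1 \<and>
      pval w2 A2 q2 = x \<and> pval v2 B2 q2 = y) \<or>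
  (\<exists>s p s' p'. x = Some (s@p) \<and> y = Some (s'@p') \<and> \<not> sublist (s@p) w1 \<and> \<not> sublist (s@p) w2 \<and>
      \<not> sublist (s'@p') v1 \<and> \<not> sublist (s'@p') v2 \<and> sublist s w1 \<and> sublist p w2 \<and> sublist s' v1 \<and> sublist p' v2 \<and>
      pval w1 A1 q1 = Some s \<and> pval v1 B1 q1 = Some s' \<and> pval w2 A2 q2 = Some p \<and> pval v2 B2 q2 = Some p'))"

lemma gV: "good w1 w2 v1 v2 A1 B1 A2 B2 x y q1 q2 \<Longrightarrow> valid_pos (length A1) q1 \<and> valid_pos (length A2) q2"
  by (simp add: good_def)

lemma gNone: "good w1 w2 v1 v2 A1 B1 A2 B2 x y q1 q2 \<Longrightarrow> (x = None) = (y = None)"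
  unfolding good_def by auto

lemma gL: "good w1 w2 v1 v2 A1 B1 A2 B2 x y q1 q2 \<Longrightarrow> x = Some u \<Longrightarrow> sublist u w1 \<Longrightarrow>
  pval w1 A1 q1 = Some u \<and> (\<exists>u'. y = Some u' \<and> pval v1 B1 q1 = Some u')"
  unfolding good_def by auto

lemma gR: "good w1 w2 v1 v2 A1 B1 A2 B2 x y q1 q2 \<Longrightarrow> x = Some u \<Longrightarrow> sublist u w2 \<Longrightarrow>
  pval w2 A2 q2 = Some u \<and> (\<exists>u'. y = Some u' \<and> pval v2 B2 q2 = Some u')"
  unfolding good_def by auto

lemma gB: "good w1 w2 v1 v2 A1 B1 A2 B2 x y q1 q2 \<Longrightarrow> x = Some u \<Longrightarrow> sublist u w1 \<Longrightarrow> sublist u w2 \<Longrightarrow>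
  y = Some u"
  unfolding good_def by auto

lemma gX: "good w1 w2 v1 v2 A1 B1 A2 B2 x y q1 q2 \<Longrightarrow> x = Some u \<Longrightarrow> \<not> sublist u w1 \<Longrightarrow> \<not> sublist u w2 \<Longrightarrow>
  \<exists>s p s' p'. u = s@p \<and> y = Some (s'@p') \<and> sublist s w1 \<and> sublist p w2 \<and>
   pval w1 A1 q1 = Some s \<and> pval v1 B1 q1 = Some s' \<and> pval w2 A2 q2 = Some p \<and> pval v2 B2 q2 = Some p'"
  unfolding good_def by auto

lemma sl1: "sublist a (a@b)" by simp
lemma sl2: "sublist b (a@b)" by simp
lemma sl3: "sublist b (a@b@c)" by simp
lemma slt: "sublist a b \<Longrightarrow> sublist b c \<Longrightarrow> sublist a c" by (rule sub_trans)

lemma FINAL_E: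
  assumes H: "\<forall>u. sublist u w1 \<longrightarrow> sublist u w2 \<longrightarrow> length u \<le> r"
    and G1: "dup_wins (Suc (Suc r)) w1 v1 A1 B1" and G2: "dup_wins (Suc (Suc r)) w2 v2 A2 B2"
    and gi: "good w1 w2 v1 v2 A1 B1 A2 B2 xi yi qi1 qi2"
    and gj: "good w1 w2 v1 v2 A1 B1 A2 B2 xj yj qj1 qj2"
    and E: "xi = xj"
  shows "yi = yj"
proof (cases xi)
  case None thus ?thesis using gNone[OF gi] gNone[OF gj] E by simp
next
  case (Some u)
  note Vi = gV[OF gi] and Vj = gV[OF gj]
  have xj: "xj = Some u" using E Some by simp
  show ?thesis
  proof (cases "sublist u w1")
    case True
    from gL[OF gi Some True] gL[OF gj xj True] show ?thesis
      using iso_eq[OF dw_iso[OF G1], of qi1 qj1] Vi Vj by auto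
  next
    case F1: False
    show ?thesis
    proof (cases "sublist u w2")
      case True
      from gR[OF gi Some True] gR[OF gj xj True] show ?thesis
        using iso_eq[OF dw_iso[OF G2], of qi2 qj2] Vi Vj by auto
    next
      case F2: False
      obtain si pi si' pi' where Xi: "u = si@pi" "yi = Some (si'@pi')" "sublist si w1" "sublist pi w2"
        "pval w1 A1 qi1 = Some si" "pval v1 B1 qi1 = Some si'" "pval w2 A2 qi2 = Some pi" "pval v2 B2 qi2 = Some pi'"
        using gX[OF gi Some F1 F2] by blast
      obtain sj pj sj' pj' where Xj: "u = sj@pj" "yj = Some (sj'@pj')" "sublist sj w1" "sublist pj w2"
        "pval w1 A1 qj1 = Some sj" "pval v1 B1 qj1 = Some sj'" "pval w2 A2 qj2 = Some pj" "pval v2 B2 qj2 = Some pj'"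
        using gX[OF gj xj F1 F2] by blast
      have "si @ pi = sj @ pj" using Xi Xj by simp
      then obtain t where "(si = sj @ t \<and> t @ pi = pj) \<or> (si @ t = sj \<and> pi = t @ pj)"
        using append_eq_append_conv2 by blast
      thus ?thesis
      proof
        assume T: "si = sj @ t \<and> t @ pi = pj"
        have tw1: "sublist t w1" using T Xi(3) slt[OF sl2] by metis
        have tw2: "sublist t w2" using T Xj(4) slt[OF sl1] by metis
        have tl: "length t \<le> Suc (Suc r)" using H tw1 tw2 by fastforce
        have "pval v1 B1 qi1 = Some (sj'@t)"
          using T1[OF G1 tw1 tl, of qi1 qj1 sj sj'] Vi Vj Xi Xj T by auto
        moreover have "pval v2 B2 qj2 = Some (t@pi')"
          using T1'[OF G2 tw2 tl, of qj2 qi2 pi pi'] Vi Vj Xi Xj T by auto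
        ultimately show ?thesis using Xi Xj by auto
      next
        assume T: "si @ t = sj \<and> pi = t @ pj"
        have tw1: "sublist t w1" using T Xj(3) slt[OF sl2] by metis
        have tw2: "sublist t w2" using T Xi(4) slt[OF sl1] by metis
        have tl: "length t \<le> Suc (Suc r)" using H tw1 tw2 by fastforce
        have "pval v1 B1 qj1 = Some (si'@t)"
          using T1[OF G1 tw1 tl, of qj1 qi1 si si'] Vi Vj Xi Xj T by auto
        moreover have "pval v2 B2 qi2 = Some (t@pj')"
          using T1'[OF G2 tw2 tl, of qi2 qj2 pj pj'] Vi Vj Xi Xj T by auto
        ultimately show ?thesis using Xi Xj by auto
      qed
    qed
  qed
qed

lemma FINAL_R:
  assumes H: "\<forall>u. sublist u w1 \<longrightarrow> sublist u w2 \<longrightarrow> length u \<le> r"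
    and G1: "dup_wins (Suc (Suc r)) w1 v1 A1 B1" and G2: "dup_wins (Suc (Suc r)) w2 v2 A2 B2"
    and gi: "good w1 w2 v1 v2 A1 B1 A2 B2 xi yi qi1 qi2"
    and gj: "good w1 w2 v1 v2 A1 B1 A2 B2 xj yj qj1 qj2"
    and gl: "good w1 w2 v1 v2 A1 B1 A2 B2 xl yl ql1 ql2"
    and xs: "xi = Some (a@b)" "xj = Some a" "xl = Some b"
  shows "\<exists>a' b'. yj = Some a' \<and> yl = Some b' \<and> yi = Some (a'@b')"
proof -
  note Vi = gV[OF gi] and Vj = gV[OF gj] and Vl = gV[OF gl]
  have HC: "\<And>t. sublist t w1 \<Longrightarrow> sublist t w2 \<Longrightarrow> length t \<le> r" using H by blast
  show ?thesis
  proof (cases "sublist (a@b) w1")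
    case True
    hence a1: "sublist a w1" and b1: "sublist b w1" using slt[OF sl1] slt[OF sl2] by blast+
    obtain u' where i: "pval w1 A1 qi1 = Some (a@b)" "yi = Some u'" "pval v1 B1 qi1 = Some u'"
      using gL[OF gi xs(1) True] by blast
    obtain a' where j: "pval w1 A1 qj1 = Some a" "yj = Some a'" "pval v1 B1 qj1 = Some a'"
      using gL[OF gj xs(2) a1] by blast
    obtain b' where l: "pval w1 A1 ql1 = Some b" "yl = Some b'" "pval v1 B1 ql1 = Some b'"
      using gL[OF gl xs(3) b1] by blast
    have "pval v1 B1 qi1 = Some (a'@b')"
      using iso_R2[OF G1, of qi1 qj1 ql1 a b a' b'] Vi Vj Vl i j l by auto
    thus ?thesis using i j l by auto
  next
    case F1: False
    show ?thesis
    proof (cases "sublist (a@b) w2")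
      case True
      hence a1: "sublist a w2" and b1: "sublist b w2" using slt[OF sl1] slt[OF sl2] by blast+
      obtain u' where i: "pval w2 A2 qi2 = Some (a@b)" "yi = Some u'" "pval v2 B2 qi2 = Some u'"
        using gR[OF gi xs(1) True] by blast
      obtain a' where j: "pval w2 A2 qj2 = Some a" "yj = Some a'" "pval v2 B2 qj2 = Some a'"
        using gR[OF gj xs(2) a1] by blast
      obtain b' where l: "pval w2 A2 ql2 = Some b" "yl = Some b'" "pval v2 B2 ql2 = Some b'"
        using gR[OF gl xs(3) b1] by blast
      have "pval v2 B2 qi2 = Some (a'@b')"
        using iso_R2[OF G2, of qi2 qj2 ql2 a b a' b'] Vi Vj Vl i j l by auto
      thus ?thesis using i j l by auto
    next
      case F2: False
      obtain s p s' p' where Xi: "a@b = s@p" "yi = Some (s'@p')" "sublist s w1" "sublist p w2"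
        "pval w1 A1 qi1 = Some s" "pval v1 B1 qi1 = Some s'" "pval w2 A2 qi2 = Some p" "pval v2 B2 qi2 = Some p'"
        using gX[OF gi xs(1) F1 F2] by blast
      obtain m where "(a = s @ m \<and> m @ b = p) \<or> (a @ m = s \<and> b = m @ p)"
        using Xi(1) append_eq_append_conv2 by blast
      thus ?thesis
      proof
        assume M: "a @ m = s \<and> b = m @ p"
        have a1: "sublist a w1" using M Xi(3) slt[OF sl1] by metis
        have m1: "sublist m w1" using M Xi(3) slt[OF sl2] by metis
        obtain a' where j: "pval w1 A1 qj1 = Some a" "yj = Some a'" "pval v1 B1 qj1 = Some a'"
          using gL[OF gj xs(2) a1] by blast
        show ?thesis
        proof (cases "sublist b w1")
          case b1: True
          have p1: "sublist p w1" using M b1 slt[OF sl2] by metis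
          have pl: "length p \<le> r" using HC[OF p1 Xi(4)] .
          have pp: "p' = p" using PIN[OF G2, of qi2 p] Vi Xi pl by auto
          obtain b' where l: "pval w1 A1 ql1 = Some b" "yl = Some b'" "pval v1 B1 ql1 = Some b'"
            using gL[OF gl xs(3) b1] by blast
          obtain m' where "pval v1 B1 qi1 = Some (a'@m')" "pval v1 B1 ql1 = Some (m'@p)"
            using T2[OF G1 p1 _ m1, of qi1 qj1 ql1 a a'] pl Vi Vj Vl Xi j l M by auto
          thus ?thesis using Xi j l pp by auto
        next
          case b1: False
          show ?thesis
          proof (cases "sublist b w2")
            case b2: True
            have m2: "sublist m w2" using M b2 slt[OF sl1] by metis
            have ml: "length m \<le> r" using HC[OF m1 m2] .
            obtain b' where l: "pval w2 A2 ql2 = Some b" "yl = Some b'" "pval v2 B2 ql2 = Some b'"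
              using gR[OF gl xs(3) b2] by blast
            have "pval v1 B1 qi1 = Some (a'@m)"
              using T1[OF G1 m1, of qi1 qj1 a a'] ml Vi Vj Xi j M by auto
            moreover have "pval v2 B2 ql2 = Some (m@p')"
              using T1'[OF G2 m2, of ql2 qi2 p p'] ml Vi Vl Xi l M by auto
            ultimately show ?thesis using Xi j l by auto
          next
            case b2: False
            obtain sl pl sl' pl' where Xl: "b = sl@pl" "yl = Some (sl'@pl')" "sublist sl w1" "sublist pl w2"
              "pval w1 A1 ql1 = Some sl" "pval v1 B1 ql1 = Some sl'" "pval w2 A2 ql2 = Some pl" "pval v2 B2 ql2 = Some pl'"
              using gX[OF gl xs(3) b1 b2] by blast
            have "m @ p = sl @ pl" using M Xl by simp
            then obtain t where "(m = sl @ t \<and> t @ p = pl) \<or> (m @ t = sl \<and> p = t @ pl)"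
              using append_eq_append_conv2 by blast
            thus ?thesis
            proof
              assume T: "m = sl @ t \<and> t @ p = pl"
              have t1: "sublist t w1" using T m1 slt[OF sl2] by metis
              have t2: "sublist t w2" using T Xl(4) slt[OF sl1] by metis
              have tl: "length t \<le> r" using HC[OF t1 t2] .
              have "pval v1 B1 qi1 = Some (a'@(sl'@t))"
                using T3[OF G1 t1 _ _, of sl qi1 qj1 ql1 a a' sl'] m1 tl Vi Vj Vl Xi Xl j M T by auto
              moreover have "pval v2 B2 ql2 = Some (t@p')"
                using T1'[OF G2 t2, of ql2 qi2 p p'] tl Vi Vl Xi Xl T by auto
              ultimately show ?thesis using Xi Xl j by auto
            next
              assume T: "m @ t = sl \<and> p = t @ pl"
              have t1: "sublist t w1" using T Xl(3) slt[OF sl2] by metis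
              have t2: "sublist t w2" using T Xi(4) slt[OF sl1] by metis
              have tl: "length t \<le> r" using HC[OF t1 t2] .
              obtain m' where "pval v1 B1 qi1 = Some (a'@m')" "pval v1 B1 ql1 = Some (m'@t)"
                using T2[OF G1 t1 _ m1, of qi1 qj1 ql1 a a'] tl Vi Vj Vl Xi Xl j M T by auto
              moreover have "pval v2 B2 qi2 = Some (t@pl')"
                using T1'[OF G2 t2, of qi2 ql2 pl pl'] tl Vi Vl Xi Xl T by auto
              ultimately show ?thesis using Xi Xl j by auto
            qed
          qed
        qed
      next
        assume M: "a = s @ m \<and> m @ b = p"
        have b2: "sublist b w2" using M Xi(4) slt[OF sl2] by metis
        have m2: "sublist m w2" using M Xi(4) slt[OF sl1] by metis
        obtain b' where l: "pval w2 A2 ql2 = Some b" "yl = Some b'" "pval v2 B2 ql2 = Some b'"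
          using gR[OF gl xs(3) b2] by blast
        show ?thesis
        proof (cases "sublist a w2")
          case a2: True
          have s2: "sublist s w2" using M a2 slt[OF sl1] by metis
          have sl: "length s \<le> r" using HC[OF Xi(3) s2] .
          have ss: "s' = s" using PIN[OF G1, of qi1 s] Vi Xi sl by auto
          obtain a' where j: "pval w2 A2 qj2 = Some a" "yj = Some a'" "pval v2 B2 qj2 = Some a'"
            using gR[OF gj xs(2) a2] by blast
          obtain m' where "pval v2 B2 qj2 = Some (s@m')" "pval v2 B2 qi2 = Some (m'@b')"
            using T2m[OF G2 s2 _ m2, of qj2 qi2 ql2 b b'] sl Vi Vj Vl Xi j l M by auto
          thus ?thesis using Xi j l ss by auto
        next
          case a2: False
          show ?thesis
          proof (cases "sublist a w1")
            case a1: True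
            have m1: "sublist m w1" using M a1 slt[OF sl2] by metis
            have ml: "length m \<le> r" using HC[OF m1 m2] .
            obtain a' where j: "pval w1 A1 qj1 = Some a" "yj = Some a'" "pval v1 B1 qj1 = Some a'"
              using gL[OF gj xs(2) a1] by blast
            have "pval v1 B1 qj1 = Some (s'@m)"
              using T1[OF G1 m1, of qj1 qi1 s s'] ml Vi Vj Xi j M by auto
            moreover have "pval v2 B2 qi2 = Some (m@b')"
              using T1'[OF G2 m2, of qi2 ql2 b b'] ml Vi Vl Xi l M by auto
            ultimately show ?thesis using Xi j l by auto
          next
            case a1: False
            obtain sj pj sj' pj' where Xj: "a = sj@pj" "yj = Some (sj'@pj')" "sublist sj w1" "sublist pj w2"
              "pval w1 A1 qj1 = Some sj" "pval v1 B1 qj1 = Some sj'" "pval w2 A2 qj2 = Some pj" "pval v2 B2 qj2 = Some pj'"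
              using gX[OF gj xs(2) a1 a2] by blast
            have "s @ m = sj @ pj" using M Xj by simp
            then obtain t where "(s = sj @ t \<and> t @ m = pj) \<or> (s @ t = sj \<and> m = t @ pj)"
              using append_eq_append_conv2 by blast
            thus ?thesis
            proof
              assume T: "s = sj @ t \<and> t @ m = pj"
              have t1: "sublist t w1" using T Xi(3) slt[OF sl2] by metis
              have t2: "sublist t w2" using T Xj(4) slt[OF sl1] by metis
              have tl: "length t \<le> r" using HC[OF t1 t2] .
              have "pval v1 B1 qi1 = Some (sj'@t)"
                using T1[OF G1 t1, of qi1 qj1 sj sj'] tl Vi Vj Xi Xj T by auto
              moreover obtain m' where "pval v2 B2 qj2 = Some (t@m')" "pval v2 B2 qi2 = Some (m'@b')"
                using T2m[OF G2 t2 _ m2, of qj2 qi2 ql2 b b'] tl Vi Vj Vl Xi Xj l M T by auto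
              ultimately show ?thesis using Xi Xj l by auto
            next
              assume T: "s @ t = sj \<and> m = t @ pj"
              have t1: "sublist t w1" using T Xj(3) slt[OF sl2] by metis
              have t2: "sublist t w2" using T m2 slt[OF sl1] by metis
              have tl: "length t \<le> r" using HC[OF t1 t2] .
              have "pval v1 B1 qj1 = Some (s'@t)"
                using T1[OF G1 t1, of qj1 qi1 s s'] tl Vi Vj Xi Xj T by auto
              moreover have "pval v2 B2 qi2 = Some ((t@pj')@b')"
                using T3m[OF G2 t2 _ _, of pj qi2 qj2 ql2 b pj' b'] m2 tl Vi Vj Vl Xi Xj l M T by auto
              ultimately show ?thesis using Xi Xj l by auto
            qed
          qed
        qed
      qed
    qed
  qed
qed

lemma gSym: "good w1 w2 v1 v2 A1 B1 A2 B2 x y q1 q2 \<Longrightarrow> length A1 = length B1 \<Longrightarrow> length A2 = length B2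
  \<Longrightarrow> good v1 v2 w1 w2 B1 A1 B2 A2 y x q1 q2"
  unfolding good_def
  apply (elim conjE)
  apply (intro conjI)
    apply (simp only: sym)
   apply (simp only: sym)
  apply (elim disjE exE conjE)
      apply (rule disjI1, simp)
     apply (rule disjI2, rule disjI1)
     apply (rule_tac x=u in exI, simp)
    apply (rule disjI2, rule disjI2, rule disjI1)
    apply (rule_tac x=u' in exI, rule_tac x=u in exI, simp)
   apply (rule disjI2, rule disjI2, rule disjI2, rule disjI1)
   apply (rule_tac x=u' in exI, rule_tac x=u in exI, simp)
  apply (rule disjI2, rule disjI2, rule disjI2, rule disjI2)
  apply (rule_tac x=s' in exI, rule_tac x=p' in exI, rule_tac x=s in exI, rule_tac x=p in exI, simp)
  done

lemma gExt:
  assumes g: "good w1 w2 v1 v2 A1 B1 A2 B2 x y q1 q2" and L: "length A1 = length B1" "length A2 = length B2"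
  shows "good w1 w2 v1 v2 (A1@[a1]) (B1@[b1]) (A2@[a2]) (B2@[b2]) x y q1 q2"
proof -
  have V: "valid_pos (length A1) q1" "valid_pos (length A2) q2" using gV[OF g] by auto
  have e: "pval w1 (A1@[a1]) q1 = pval w1 A1 q1" "pval v1 (B1@[b1]) q1 = pval v1 B1 q1"
    "pval w2 (A2@[a2]) q2 = pval w2 A2 q2" "pval v2 (B2@[b2]) q2 = pval v2 B2 q2"
    using V L pval_app by metis+
  have V': "valid_pos (length (A1@[a1])) q1" "valid_pos (length (A2@[a2])) q2" using V vext by blast+
  show ?thesis using g V' unfolding good_def e by simp
qed

lemma sub_single: "sublist [c] w \<longleftrightarrow> c \<in> set w"
proof
  assume "sublist [c] w" thus "c \<in> set w" using set_mono_sublist by fastforce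
next
  assume "c \<in> set w"
  then obtain ps ss where "w = ps @ [c] @ ss" using split_list by fastforce
  thus "sublist [c] w" unfolding sublist_def by blast
qed

lemma dw_set: "dup_wins n w v A B \<Longrightarrow> c \<in> set w \<longleftrightarrow> c \<in> set v"
proof -
  assume D: "dup_wins n w v A B"
  have "pval w A (Letter c) \<noteq> None \<Longrightarrow> pval v B (Letter c) \<noteq> None"
    using iso_some[OF dw_iso[OF D], of "Letter c"] by simp
  moreover have "pval v B (Letter c) \<noteq> None \<Longrightarrow> pval w A (Letter c) \<noteq> None"
    using iso_some[OF dw_iso[OF dw_sym[OF D]], of "Letter c"] by simp
  ultimately show ?thesis by (auto simp: letter_const_def split: if_splits)
qed

lemma GCONST:
  assumes G1: "dup_wins n1 w1 v1 A1 B1" and G2: "dup_wins n2 w2 v2 A2 B2" and q: "q = Eps \<or> q = Letter c"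
  shows "\<exists>q1 q2. good w1 w2 v1 v2 A1 B1 A2 B2 (pval (w1@w2) as q) (pval (v1@v2) bs q) q1 q2"
proof -
  have s1: "c \<in> set w1 \<longleftrightarrow> c \<in> set v1" using dw_set[OF G1] .
  have s2: "c \<in> set w2 \<longleftrightarrow> c \<in> set v2" using dw_set[OF G2] .
  show ?thesis
  proof (cases "q = Eps")
    case True
    have "good w1 w2 v1 v2 A1 B1 A2 B2 (pval (w1@w2) as q) (pval (v1@v2) bs q) Eps Eps"
      unfolding good_def using True by simp
    thus ?thesis by blast
  next
    case False
    hence q: "q = Letter c" using q by simp
    show ?thesis
    proof (cases "c \<in> set w1")
      case c1: True
      show ?thesis
      proof (cases "c \<in> set w2")
        case True
        have "good w1 w2 v1 v2 A1 B1 A2 B2 (pval (w1@w2) as q) (pval (v1@v2) bs q) (Letter c) (Letter c)"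
          unfolding good_def using True c1 s1 s2 q by (simp add: letter_const_def sub_single)
        thus ?thesis by blast
      next
        case False
        have "good w1 w2 v1 v2 A1 B1 A2 B2 (pval (w1@w2) as q) (pval (v1@v2) bs q) (Letter c) Eps"
          unfolding good_def using False c1 s1 s2 q by (simp add: letter_const_def sub_single)
        thus ?thesis by blast
      qed
    next
      case c1: False
      show ?thesis
      proof (cases "c \<in> set w2")
        case True
        have "good w1 w2 v1 v2 A1 B1 A2 B2 (pval (w1@w2) as q) (pval (v1@v2) bs q) Eps (Letter c)"
          unfolding good_def using True c1 s1 s2 q by (simp add: letter_const_def sub_single)
        thus ?thesis by blast
      next
        case False
        have "good w1 w2 v1 v2 A1 B1 A2 B2 (pval (w1@w2) as q) (pval (v1@v2) bs q) Eps Eps"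
          unfolding good_def using False c1 s1 s2 q by (simp add: letter_const_def)
        thus ?thesis by blast
      qed
    qed
  qed
qed

lemma FINAL_iso:
  assumes H: "\<forall>u. sublist u w1 \<longrightarrow> sublist u w2 \<longrightarrow> length u \<le> r"
    and Hv: "\<forall>u. sublist u v1 \<longrightarrow> sublist u v2 \<longrightarrow> length u \<le> r"
    and G1: "dup_wins (Suc (Suc r)) w1 v1 A1 B1" and G2: "dup_wins (Suc (Suc r)) w2 v2 A2 B2"
    and Lab: "length as = length bs"
    and GQ: "\<And>q. valid_pos (length as) q \<Longrightarrow>
        \<exists>q1 q2. good w1 w2 v1 v2 A1 B1 A2 B2 (pval (w1@w2) as q) (pval (v1@v2) bs q) q1 q2"
  shows "partial_iso (w1@w2) (v1@v2) as bs"
proof -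
  have L1: "length A1 = length B1" using G1 dw_len by blast
  have L2: "length A2 = length B2" using G2 dw_len by blast
  have G1': "dup_wins (Suc (Suc r)) v1 w1 B1 A1" using dw_sym[OF G1] .
  have G2': "dup_wins (Suc (Suc r)) v2 w2 B2 A2" using dw_sym[OF G2] .
  have "\<forall>i j l. valid_pos (length as) i \<and> valid_pos (length as) j \<and> valid_pos (length as) l \<longrightarrow>
        (pval (w1@w2) as i = pval (w1@w2) as j \<longleftrightarrow> pval (v1@v2) bs i = pval (v1@v2) bs j) \<and>
        (Rcat (pval (w1@w2) as i) (pval (w1@w2) as j) (pval (w1@w2) as l) \<longleftrightarrow>
         Rcat (pval (v1@v2) bs i) (pval (v1@v2) bs j) (pval (v1@v2) bs l))"
  proof (intro allI impI)
    fix i j l :: "'a pos"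
    assume "valid_pos (length as) i \<and> valid_pos (length as) j \<and> valid_pos (length as) l"
    then obtain i1 i2 j1 j2 l1 l2 where
      gi: "good w1 w2 v1 v2 A1 B1 A2 B2 (pval (w1@w2) as i) (pval (v1@v2) bs i) i1 i2" and
      gj: "good w1 w2 v1 v2 A1 B1 A2 B2 (pval (w1@w2) as j) (pval (v1@v2) bs j) j1 j2" and
      gl: "good w1 w2 v1 v2 A1 B1 A2 B2 (pval (w1@w2) as l) (pval (v1@v2) bs l) l1 l2"
      using GQ by meson
    note gi' = gSym[OF gi L1 L2] and gj' = gSym[OF gj L1 L2] and gl' = gSym[OF gl L1 L2]
    have E: "pval (w1@w2) as i = pval (w1@w2) as j \<longleftrightarrow> pval (v1@v2) bs i = pval (v1@v2) bs j"
      using FINAL_E[OF H G1 G2 gi gj] FINAL_E[OF Hv G1' G2' gi' gj'] by blast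
    have R1: "Rcat (pval (w1@w2) as i) (pval (w1@w2) as j) (pval (w1@w2) as l) \<Longrightarrow>
         Rcat (pval (v1@v2) bs i) (pval (v1@v2) bs j) (pval (v1@v2) bs l)"
    proof -
      assume "Rcat (pval (w1@w2) as i) (pval (w1@w2) as j) (pval (w1@w2) as l)"
      then obtain a b where "pval (w1@w2) as i = Some (a@b)" "pval (w1@w2) as j = Some a" "pval (w1@w2) as l = Some b"
        by (auto simp: Rcat_def)
      from FINAL_R[OF H G1 G2 gi gj gl this] show ?thesis by (auto simp: Rcat_def)
    qed
    have R2: "Rcat (pval (v1@v2) bs i) (pval (v1@v2) bs j) (pval (v1@v2) bs l) \<Longrightarrow>
         Rcat (pval (w1@w2) as i) (pval (w1@w2) as j) (pval (w1@w2) as l)"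
    proof -
      assume "Rcat (pval (v1@v2) bs i) (pval (v1@v2) bs j) (pval (v1@v2) bs l)"
      then obtain a b where "pval (v1@v2) bs i = Some (a@b)" "pval (v1@v2) bs j = Some a" "pval (v1@v2) bs l = Some b"
        by (auto simp: Rcat_def)
      from FINAL_R[OF Hv G1' G2' gi' gj' gl' this] show ?thesis by (auto simp: Rcat_def)
    qed
    show "(pval (w1@w2) as i = pval (w1@w2) as j \<longleftrightarrow> pval (v1@v2) bs i = pval (v1@v2) bs j) \<and>
        (Rcat (pval (w1@w2) as i) (pval (w1@w2) as j) (pval (w1@w2) as l) \<longleftrightarrow>
         Rcat (pval (v1@v2) bs i) (pval (v1@v2) bs j) (pval (v1@v2) bs l))"
      using E R1 R2 by blast
  qed
  thus ?thesis using Lab unfolding partial_iso_def by blast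
qed

declare dup_wins.simps(2)[simp del]

definition INV where
"INV w1 w2 v1 v2 r n as bs A1 B1 A2 B2 \<longleftrightarrow> length A1 = length as \<and> length A2 = length as \<and>
   length bs = length as \<and> dup_wins (n + r + 2) w1 v1 A1 B1 \<and> dup_wins (n + r + 2) w2 v2 A2 B2 \<and>
   (\<forall>i<length as. good w1 w2 v1 v2 A1 B1 A2 B2 (as!i) (bs!i) (Chosen i) (Chosen i))"

lemma INV_sym: "INV w1 w2 v1 v2 r n as bs A1 B1 A2 B2 \<Longrightarrow> INV v1 v2 w1 w2 r n bs as B1 A1 B2 A2"
proof -
  assume I: "INV w1 w2 v1 v2 r n as bs A1 B1 A2 B2"
  hence D1: "dup_wins (n + r + 2) w1 v1 A1 B1" and D2: "dup_wins (n + r + 2) w2 v2 A2 B2"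
    by (auto simp: INV_def)
  have L1: "length A1 = length B1" using D1 dw_len by blast
  have L2: "length A2 = length B2" using D2 dw_len by blast
  have L: "length A1 = length as" "length A2 = length as" "length bs = length as" using I by (auto simp: INV_def)
  have g: "\<forall>i<length bs. good v1 v2 w1 w2 B1 A1 B2 A2 (bs!i) (as!i) (Chosen i) (Chosen i)"
  proof (intro allI impI)
    fix i assume "i < length bs"
    hence "good w1 w2 v1 v2 A1 B1 A2 B2 (as!i) (bs!i) (Chosen i) (Chosen i)" using I L(3) unfolding INV_def by simp
    from gSym[OF this L1 L2] show "good v1 v2 w1 w2 B1 A1 B2 A2 (bs!i) (as!i) (Chosen i) (Chosen i)" .
  qed
  have "length B1 = length bs" "length B2 = length bs" "length as = length bs" using L L1 L2 by simp_all
  thus ?thesis using g dw_sym[OF D1] dw_sym[OF D2] unfolding INV_def by blast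
qed

lemma INV_ext:
  assumes I: "INV w1 w2 v1 v2 r (Suc n) as bs A1 B1 A2 B2"
    and D1: "dup_wins (n + r + 2) w1 v1 (A1@[a1]) (B1@[b1])"
    and D2: "dup_wins (n + r + 2) w2 v2 (A2@[a2]) (B2@[b2])"
    and g: "good w1 w2 v1 v2 (A1@[a1]) (B1@[b1]) (A2@[a2]) (B2@[b2]) x y (Chosen (length as)) (Chosen (length as))"
  shows "INV w1 w2 v1 v2 r n (as@[x]) (bs@[y]) (A1@[a1]) (B1@[b1]) (A2@[a2]) (B2@[b2])"
proof -
  have L: "length A1 = length as" "length A2 = length as" "length bs = length as" using I by (auto simp: INV_def)
  have L1: "length A1 = length B1" "length A2 = length B2" using D1 D2 dw_len by fastforce+
  have "\<forall>i<length (as@[x]). good w1 w2 v1 v2 (A1@[a1]) (B1@[b1]) (A2@[a2]) (B2@[b2]) ((as@[x])!i) ((bs@[y])!i) (Chosen i) (Chosen i)"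
  proof (intro allI impI)
    fix i assume "i < length (as@[x])"
    hence "i < length as \<or> i = length as" by auto
    thus "good w1 w2 v1 v2 (A1@[a1]) (B1@[b1]) (A2@[a2]) (B2@[b2]) ((as@[x])!i) ((bs@[y])!i) (Chosen i) (Chosen i)"
    proof
      assume i: "i < length as"
      hence "good w1 w2 v1 v2 A1 B1 A2 B2 (as!i) (bs!i) (Chosen i) (Chosen i)" using I by (auto simp: INV_def)
      from gExt[OF this L1] show ?thesis using i L by (simp add: nth_append)
    next
      assume i: "i = length as"
      thus ?thesis using g L by (simp add: nth_append)
    qed
  qed
  thus ?thesis using L D1 D2 unfolding INV_def by simp
qed

lemma STEP:
  assumes C: "Facs w1 \<inter> Facs w2 = Facs v1 \<inter> Facs v2"
    and H: "\<forall>u. sublist u w1 \<longrightarrow> sublist u w2 \<longrightarrow> length u \<le> r"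
    and I: "INV w1 w2 v1 v2 r (Suc n) as bs A1 B1 A2 B2"
    and x: "x \<in> univ (w1@w2)"
  shows "\<exists>y\<in>univ (v1@v2). \<exists>a1 b1 a2 b2. INV w1 w2 v1 v2 r n (as@[x]) (bs@[y]) (A1@[a1]) (B1@[b1]) (A2@[a2]) (B2@[b2])"
proof -
  define N where "N = n + r + 2"
  have NS: "N = Suc (Suc (n + r))" unfolding N_def by simp
  have G1: "dup_wins (Suc N) w1 v1 A1 B1" and G2: "dup_wins (Suc N) w2 v2 A2 B2"
    using I unfolding INV_def N_def by (simp_all add: add.commute add.left_commute)
  have L: "length A1 = length as" "length A2 = length as" "length bs = length as" using I by (auto simp: INV_def)
  have L1: "length B1 = length as" "length B2 = length as" using G1 G2 dw_len L by fastforce+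
  have CC: "\<And>u. sublist u v1 \<Longrightarrow> sublist u v2 \<Longrightarrow> sublist u w1 \<and> sublist u w2"
    using C unfolding Facs_def by blast
  have CC': "\<And>u. sublist u w1 \<Longrightarrow> sublist u w2 \<Longrightarrow> sublist u v1 \<and> sublist u v2"
    using C unfolding Facs_def by blast
  have HC: "\<And>u. sublist u w1 \<Longrightarrow> sublist u w2 \<Longrightarrow> length u \<le> r" using H by blast
  have VC: "valid_pos (Suc (length as)) (Chosen (length as))" by simp
  have suff: "\<exists>y\<in>univ (v1@v2). \<exists>a1 b1 a2 b2. dup_wins N w1 v1 (A1@[a1]) (B1@[b1]) \<and>
      dup_wins N w2 v2 (A2@[a2]) (B2@[b2]) \<and>
      good w1 w2 v1 v2 (A1@[a1]) (B1@[b1]) (A2@[a2]) (B2@[b2]) x y (Chosen (length as)) (Chosen (length as))"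
  proof (cases x)
    case None
    obtain b1 where D1: "dup_wins N w1 v1 (A1@[None]) (B1@[b1])" using dwD1[OF G1 None_univ] by blast
    obtain b2 where D2: "dup_wins N w2 v2 (A2@[None]) (B2@[b2])" using dwD1[OF G2 None_univ] by blast
    have "good w1 w2 v1 v2 (A1@[None]) (B1@[b1]) (A2@[None]) (B2@[b2]) x None (Chosen (length as)) (Chosen (length as))"
      unfolding good_def using None L by simp
    thus ?thesis using D1 D2 None_univ by blast
  next
    case (Some u)
    have uw: "sublist u (w1@w2)" using x Some Some_univ by blast
    show ?thesis
    proof (cases "sublist u w1 \<and> sublist u w2")
      case True
      have ul: "length u \<le> Suc N" using HC True NS by fastforce
      have D1: "dup_wins N w1 v1 (A1@[Some u]) (B1@[Some u])" using OP_import[OF G1 _ ul] True by blast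
      have D2: "dup_wins N w2 v2 (A2@[Some u]) (B2@[Some u])" using OP_import[OF G2 _ ul] True by blast
      have v: "sublist u v1" "sublist u v2" using CC' True by blast+
      have "good w1 w2 v1 v2 (A1@[Some u]) (B1@[Some u]) (A2@[Some u]) (B2@[Some u]) x (Some u) (Chosen (length as)) (Chosen (length as))"
        unfolding good_def using Some L L1 True v by (simp add: nth_append)
      moreover have "Some u \<in> univ (v1@v2)" using v Some_univ slt[OF _ sl1] by blast
      ultimately show ?thesis using D1 D2 by blast
    next
      case nB: False
      show ?thesis
      proof (cases "sublist u w1")
        case u1: True
        hence u2: "\<not> sublist u w2" using nB by blast
        obtain u' where u'1: "sublist u' v1" and D1: "dup_wins N w1 v1 (A1@[Some u]) (B1@[Some u'])"
          using OP_pick[OF G1 u1] by blast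
        obtain b2 where D2: "dup_wins N w2 v2 (A2@[None]) (B2@[b2])" using dwD1[OF G2 None_univ] by blast
        have u'2: "\<not> sublist u' v2"
        proof
          assume u'2: "sublist u' v2"
          have w: "sublist u' w1" "sublist u' w2" using CC u'1 u'2 by blast+
          have "length u' \<le> Suc N" using HC[OF w] NS by simp
          hence "pval w1 (A1@[Some u]) (Chosen (length as)) = Some u'"
            using PIN[OF dw_sym[OF D1], of "Chosen (length as)" u'] u'1 L L1 by (simp add: nth_append)
          hence "u = u'" using L by (simp add: nth_append)
          thus False using u2 w by simp
        qed
        have "good w1 w2 v1 v2 (A1@[Some u]) (B1@[Some u']) (A2@[None]) (B2@[b2]) x (Some u') (Chosen (length as)) (Chosen (length as))"
          unfolding good_def using Some L L1 u1 u2 u'1 u'2 by (simp add: nth_append)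
        moreover have "Some u' \<in> univ (v1@v2)" using u'1 Some_univ slt[OF _ sl1] by blast
        ultimately show ?thesis using D1 D2 by blast
      next
        case nu1: False
        show ?thesis
        proof (cases "sublist u w2")
          case u2: True
          obtain u' where u'2: "sublist u' v2" and D2: "dup_wins N w2 v2 (A2@[Some u]) (B2@[Some u'])"
            using OP_pick[OF G2 u2] by blast
          obtain b1 where D1: "dup_wins N w1 v1 (A1@[None]) (B1@[b1])" using dwD1[OF G1 None_univ] by blast
          have u'1: "\<not> sublist u' v1"
          proof
            assume u'1: "sublist u' v1"
            have w: "sublist u' w1" "sublist u' w2" using CC u'1 u'2 by blast+
            have "length u' \<le> Suc N" using HC[OF w] NS by simp
            hence "pval w2 (A2@[Some u]) (Chosen (length as)) = Some u'"
              using PIN[OF dw_sym[OF D2], of "Chosen (length as)" u'] u'2 L L1 by (simp add: nth_append)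
            hence "u = u'" using L by (simp add: nth_append)
            thus False using nu1 w by simp
          qed
          have "good w1 w2 v1 v2 (A1@[None]) (B1@[b1]) (A2@[Some u]) (B2@[Some u']) x (Some u') (Chosen (length as)) (Chosen (length as))"
            unfolding good_def using Some L L1 u2 nu1 u'1 u'2 by (simp add: nth_append)
          moreover have "Some u' \<in> univ (v1@v2)" using u'2 Some_univ slt[OF _ sl2] by blast
          ultimately show ?thesis using D1 D2 by blast
        next
          case nu2: False
          then obtain s p where sp: "u = s@p" "suffix s w1" "prefix p w2"
            using uw nu1 sublist_append by blast
          have s1: "sublist s w1" and p2: "sublist p w2" using sp by auto
          obtain s' where s'1: "sublist s' v1" and D1: "dup_wins N w1 v1 (A1@[Some s]) (B1@[Some s'])"
            using OP_pick[OF G1 s1] by blast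
          obtain p' where p'2: "sublist p' v2" and D2: "dup_wins N w2 v2 (A2@[Some p]) (B2@[Some p'])"
            using OP_pick[OF G2 p2] by blast
          have D1': "dup_wins (Suc (Suc (n+r))) w1 v1 (A1@[Some s]) (B1@[Some s'])" using D1 NS by simp
          have D2': "dup_wins (Suc (Suc (n+r))) w2 v2 (A2@[Some p]) (B2@[Some p'])" using D2 NS by simp
          obtain s'' where "pval v1 (B1@[Some s']) (Chosen (length as)) = Some s''" "suffix s'' v1"
            using SUFFIX[OF D1', of "Chosen (length as)" s] sp L by (auto simp: nth_append)
          hence ss: "suffix s' v1" using L1 by (simp add: nth_append)
          obtain p'' where "pval v2 (B2@[Some p']) (Chosen (length as)) = Some p''" "prefix p'' v2"
            using PREFIX[OF D2', of "Chosen (length as)" p] sp L by (auto simp: nth_append)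
          hence pp: "prefix p' v2" using L1 by (simp add: nth_append)
          have yu: "Some (s'@p') \<in> univ (v1@v2)" using ss pp sublist_append Some_univ by blast
          have n1: "\<not> sublist (s'@p') v1"
          proof
            assume a: "sublist (s'@p') v1"
            have p'1: "sublist p' v1" using a slt[OF sl2] by blast
            have w: "sublist p' w1" "sublist p' w2" using CC p'1 p'2 by blast+
            have pl: "length p' \<le> r" using HC[OF w] .
            have "pval w2 (A2@[Some p]) (Chosen (length as)) = Some p'"
              using PIN[OF dw_sym[OF D2], of "Chosen (length as)" p'] p'2 pl NS L L1 by (simp add: nth_append)
            hence pe: "p = p'" using L by (simp add: nth_append)
            have E1: "dup_wins (Suc (Suc (n+r))) v1 w1 (B1@[Some s']) (A1@[Some s])" using dw_sym[OF D1'] .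
            obtain z where z1: "sublist z w1" and
              E2: "dup_wins (Suc (n+r)) v1 w1 ((B1@[Some s'])@[Some (s'@p)]) ((A1@[Some s])@[Some z])"
              using OP_pick[OF E1, of "s'@p"] a pe by blast
            have E3: "dup_wins (n+r) v1 w1 (((B1@[Some s'])@[Some (s'@p)])@[Some p]) (((A1@[Some s])@[Some z])@[Some p])"
              using OP_import[OF E2, of p] p'1 pe pl by simp
            have "pval w1 (((A1@[Some s])@[Some z])@[Some p]) (Chosen (Suc (length as))) = Some (s@p)"
              apply (rule iso_R2[OF E3, of _ "Chosen (length as)" "Chosen (Suc (Suc (length as)))" s' p])
              using L L1 by (auto simp: nth_append)
            hence "z = s@p" using L by (simp add: nth_append)
            thus False using z1 nu1 sp by simp
          qed
          have n2: "\<not> sublist (s'@p') v2"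
          proof
            assume a: "sublist (s'@p') v2"
            have s'2: "sublist s' v2" using a slt[OF sl1] by blast
            have w: "sublist s' w1" "sublist s' w2" using CC s'1 s'2 by blast+
            have sl: "length s' \<le> r" using HC[OF w] .
            have "pval w1 (A1@[Some s]) (Chosen (length as)) = Some s'"
              using PIN[OF dw_sym[OF D1], of "Chosen (length as)" s'] s'1 sl NS L L1 by (simp add: nth_append)
            hence se: "s = s'" using L by (simp add: nth_append)
            have E1: "dup_wins (Suc (Suc (n+r))) v2 w2 (B2@[Some p']) (A2@[Some p])" using dw_sym[OF D2'] .
            obtain z where z1: "sublist z w2" and
              E2: "dup_wins (Suc (n+r)) v2 w2 ((B2@[Some p'])@[Some (s@p')]) ((A2@[Some p])@[Some z])"
              using OP_pick[OF E1, of "s@p'"] a se by blast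
            have E3: "dup_wins (n+r) v2 w2 (((B2@[Some p'])@[Some (s@p')])@[Some s]) (((A2@[Some p])@[Some z])@[Some s])"
              using OP_import[OF E2, of s] s'2 se sl by simp
            have "pval w2 (((A2@[Some p])@[Some z])@[Some s]) (Chosen (Suc (length as))) = Some (s@p)"
              apply (rule iso_R2[OF E3, of _ "Chosen (Suc (Suc (length as)))" "Chosen (length as)" s p'])
              using L L1 by (auto simp: nth_append)
            hence "z = s@p" using L by (simp add: nth_append)
            thus False using z1 nu2 sp by simp
          qed
          have "good w1 w2 v1 v2 (A1@[Some s]) (B1@[Some s']) (A2@[Some p]) (B2@[Some p']) x (Some (s'@p')) (Chosen (length as)) (Chosen (length as))"
            unfolding good_def using Some L L1 sp nu1 nu2 n1 n2 s1 p2 s'1 p'2 by (simp add: nth_append)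
          thus ?thesis using D1 D2 yu by blast
        qed
      qed
    qed
  qed
  then obtain y a1 b1 a2 b2 where y: "y \<in> univ (v1@v2)" and D1: "dup_wins N w1 v1 (A1@[a1]) (B1@[b1])"
    and D2: "dup_wins N w2 v2 (A2@[a2]) (B2@[b2])"
    and g: "good w1 w2 v1 v2 (A1@[a1]) (B1@[b1]) (A2@[a2]) (B2@[b2]) x y (Chosen (length as)) (Chosen (length as))"
    by blast
  show ?thesis using y INV_ext[OF I D1[unfolded N_def] D2[unfolded N_def] g] by blast
qed

lemma MAIN:
  assumes C: "Facs w1 \<inter> Facs w2 = Facs v1 \<inter> Facs v2"
    and H: "\<forall>u. sublist u w1 \<longrightarrow> sublist u w2 \<longrightarrow> length u \<le> r"
  shows "INV w1 w2 v1 v2 r n as bs A1 B1 A2 B2 \<Longrightarrow> dup_wins n (w1@w2) (v1@v2) as bs"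
proof (induction n arbitrary: as bs A1 B1 A2 B2)
  case 0
  have Hv: "\<forall>u. sublist u v1 \<longrightarrow> sublist u v2 \<longrightarrow> length u \<le> r"
    using H C unfolding Facs_def by blast
  have G1: "dup_wins (Suc (Suc r)) w1 v1 A1 B1" and G2: "dup_wins (Suc (Suc r)) w2 v2 A2 B2"
    using "0" unfolding INV_def by simp_all
  have L: "length as = length bs" using "0" unfolding INV_def by simp
  have LA: "length A1 = length as" "length A2 = length as" using "0" unfolding INV_def by simp_all
  have GQ: "\<exists>q1 q2. good w1 w2 v1 v2 A1 B1 A2 B2 (pval (w1@w2) as q) (pval (v1@v2) bs q) q1 q2"
    if V: "valid_pos (length as) q" for q
  proof (cases q)
    case (Chosen i)
    hence "i < length as" using V by simp
    hence "good w1 w2 v1 v2 A1 B1 A2 B2 (as!i) (bs!i) (Chosen i) (Chosen i)" using "0" unfolding INV_def by blast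
    thus ?thesis using Chosen by auto
  next
    case (Letter c) thus ?thesis using GCONST[OF G1 G2] by blast
  next
    case Eps thus ?thesis using GCONST[OF G1 G2] by blast
  qed
  show ?case using FINAL_iso[OF H Hv G1 G2 L GQ] by simp
next
  case (Suc n)
  have C': "Facs v1 \<inter> Facs v2 = Facs w1 \<inter> Facs w2" using C by simp
  have Hv: "\<forall>u. sublist u v1 \<longrightarrow> sublist u v2 \<longrightarrow> length u \<le> r"
    using H C unfolding Facs_def by blast
  show ?case
  proof (rule dwI)
    show "\<forall>a\<in>univ (w1@w2). \<exists>b\<in>univ (v1@v2). dup_wins n (w1@w2) (v1@v2) (as @ [a]) (bs @ [b])"
    proof
      fix a assume "a \<in> univ (w1@w2)"
      then obtain y a1 b1 a2 b2 where "y \<in> univ (v1@v2)"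
        "INV w1 w2 v1 v2 r n (as@[a]) (bs@[y]) (A1@[a1]) (B1@[b1]) (A2@[a2]) (B2@[b2])"
        using STEP[OF C H Suc.prems] by blast
      thus "\<exists>b\<in>univ (v1@v2). dup_wins n (w1@w2) (v1@v2) (as @ [a]) (bs @ [b])" using Suc.IH by blast
    qed
    show "\<forall>b\<in>univ (v1@v2). \<exists>a\<in>univ (w1@w2). dup_wins n (w1@w2) (v1@v2) (as @ [a]) (bs @ [b])"
    proof
      fix b assume "b \<in> univ (v1@v2)"
      then obtain y a1 b1 a2 b2 where "y \<in> univ (w1@w2)"
        "INV v1 v2 w1 w2 r n (bs@[b]) (as@[y]) (B1@[a1]) (A1@[b1]) (B2@[a2]) (A2@[b2])"
        using STEP[OF C' Hv INV_sym[OF Suc.prems]] by blast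
      thus "\<exists>a\<in>univ (w1@w2). dup_wins n (w1@w2) (v1@v2) (as @ [a]) (bs @ [b])" using Suc.IH INV_sym by blast
    qed
  qed
qed

lemma finite_Facs: "finite (Facs w)"
  unfolding Facs_def using set_sublists_eq[of w] by (metis List.finite_set)

theorem lemma4p4:
  fixes w1 w2 v1 v2 :: "'a::finite list" and k r :: nat
  assumes "Facs w1 \<inter> Facs w2 = Facs v1 \<inter> Facs v2"
    and "r = Max (length ` (Facs w1 \<inter> Facs w2))"
    and "k \<ge> 1"
    and "ef_equiv w1 (k + r + 2) v1"
    and "ef_equiv w2 (k + r + 2) v2"
  shows "ef_equiv (w1 @ w2) k (v1 @ v2)"
proof -
  have fin: "finite (length ` (Facs w1 \<inter> Facs w2))" using finite_Facs by blast
  have H: "\<forall>u. sublist u w1 \<longrightarrow> sublist u w2 \<longrightarrow> length u \<le> r"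
  proof (intro allI impI)
    fix u assume "sublist u w1" "sublist u w2"
    hence "length u \<in> length ` (Facs w1 \<inter> Facs w2)" unfolding Facs_def by blast
    thus "length u \<le> r" using assms(2) Max_ge[OF fin] by blast
  qed
  have "INV w1 w2 v1 v2 r k [] [] [] [] [] []"
    using assms(4,5) unfolding INV_def ef_equiv_def by simp
  from MAIN[OF assms(1) H this] show ?thesis unfolding ef_equiv_def .
qed

end
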